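(* Let $\zeta_2=\int_0^\infty \frac{\mathrm{d}t}{\sqrt{1+t^4}}$ and let $\mathrm{sleafh}_2:(-\zeta_2,\zeta_2)\to\mathbb{R}$ be the hyperbolic leaf function of basis $2$. For every real $l$ with $2l\in(-\zeta_2,\zeta_2)$, $$\mathrm{sleafh}_2(2l)=\frac{2\,\mathrm{sleafh}_2(l)\sqrt{1+(\mathrm{sleafh}_2(l))^4}}{1-(\mathrm{sleafh}_2(l))^4}.$$
   Context: For a natural number $n$, let $\zeta_n=\int_0^\infty \frac{\mathrm{d}t}{\sqrt{1+t^{2n}}}$. The hyperbolic leaf function $\mathrm{sleafh}_n$ is the solution $r(l)$ on $(-\zeta_n,\zeta_n)$ of $\frac{\mathrm{d}^2r}{\mathrm{d}l^2}=n\,r^{2n-1}$ with $r(0)=0$, $r'(0)=1$; equivalently it is the inverse function of $r\mapsto \int_0^r \frac{\mathrm{d}t}{\sqrt{1+t^{2n}}}$, $r\in\mathbb{R}$. *)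

theory Defs
  imports "HOL-Analysis.Analysis"
begin

definition leaf_integrand :: "nat \<Rightarrow> real \<Rightarrow> real" where
  "leaf_integrand n t = 1 / sqrt (1 + t ^ (2 * n))"

definition zeta :: "nat \<Rightarrow> real" where
  "zeta n = integral {0..} (leaf_integrand n)"

definition leaf_int :: "nat \<Rightarrow> real \<Rightarrow> real" where
  "leaf_int n r = (if 0 \<le> r then integral {0..r} (leaf_integrand n)
                   else - integral {r..0} (leaf_integrand n))"

definition sleafh :: "nat \<Rightarrow> real \<Rightarrow> real" where
  "sleafh n l = (THE r. leaf_int n r = l)"

end

theory Submission
  imports Defs
begin

lemma f_eq: "leaf_integrand 2 t = 1 / sqrt (1 + t ^ 4)"
  by (simp add: leaf_integrand_def)

lemma f_pos: "leaf_integrand 2 t > 0"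
  by (simp add: f_eq add_pos_nonneg)

lemma f_cont: "continuous_on S (leaf_integrand 2)"
proof -
  have p: "(1::real) + t^4 > 0" for t by (simp add: add_pos_nonneg)
  show ?thesis unfolding f_eq using p by (intro continuous_intros) (auto, metis less_irrefl)
qed

lemma f_int: "leaf_integrand 2 integrable_on {a..b}"
  by (rule integrable_continuous_real[OF f_cont])

lemma F_alt:
  assumes "R > 0" "-R \<le> r"
  shows "leaf_int 2 r = integral {-R..r} (leaf_integrand 2) - integral {-R..0} (leaf_integrand 2)"
proof (cases "0 \<le> r")
  case True
  have "integral {-R..0} (leaf_integrand 2) + integral {0..r} (leaf_integrand 2)
        = integral {-R..r} (leaf_integrand 2)"
    using Henstock_Kurzweil_Integration.integral_combine[where a="-R" and c=0 and b=r and f="leaf_integrand 2"] f_int assms True by auto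
  then show ?thesis using True by (simp add: leaf_int_def)
next
  case False
  have "integral {-R..r} (leaf_integrand 2) + integral {r..0} (leaf_integrand 2)
        = integral {-R..0} (leaf_integrand 2)"
    using Henstock_Kurzweil_Integration.integral_combine[where a="-R" and c=r and b=0 and f="leaf_integrand 2"] f_int assms False by auto
  then show ?thesis using False by (simp add: leaf_int_def)
qed

lemma F_deriv: "DERIV (leaf_int 2) r :> leaf_integrand 2 r"
proof -
  define R where "R = \<bar>r\<bar> + 1"
  have R: "R > 0" "-R < r" "r < R" unfolding R_def by auto
  have "((\<lambda>x. integral {-R..x} (leaf_integrand 2)) has_real_derivative leaf_integrand 2 r)
          (at r within {-R..R})"
    using R by (intro integral_has_real_derivative f_cont) auto
  moreover have "at r within {-R..R} = at r"
    using R by (intro at_within_interior) auto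
  ultimately have "((\<lambda>x. integral {-R..x} (leaf_integrand 2) - integral {-R..0} (leaf_integrand 2))
        has_real_derivative leaf_integrand 2 r) (at r)"
    by (auto intro!: derivative_eq_intros)
  then show ?thesis
    by (rule has_field_derivative_transform_within_open[where S="{-R<..<R}"])
       (use R in \<open>auto simp: F_alt[OF R(1)]\<close>)
qed

lemma F_cont: "continuous_on S (leaf_int 2)"
  using F_deriv by (meson DERIV_isCont continuous_at_imp_continuous_on)

lemma F_0: "leaf_int 2 0 = 0"
  by (simp add: leaf_int_def)

lemma F_mono: "x < y \<Longrightarrow> leaf_int 2 x < leaf_int 2 y"
  by (rule DERIV_pos_imp_increasing) (use F_deriv f_pos in auto)

lemma F_le: "x \<le> y \<longleftrightarrow> leaf_int 2 x \<le> leaf_int 2 y"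
  using F_mono[of x y] F_mono[of y x] by (cases x y rule: linorder_cases) auto

lemma F_inj: "leaf_int 2 x = leaf_int 2 y \<longleftrightarrow> x = y"
  using F_le by (metis order_antisym order_refl)

lemma F_odd: "leaf_int 2 (-x) = - leaf_int 2 x"
proof -
  have "\<forall>x. DERIV (\<lambda>x. leaf_int 2 (-x) + leaf_int 2 x) x :> 0"
  proof
    fix x
    have "DERIV (\<lambda>x. leaf_int 2 (-x) + leaf_int 2 x) x :> leaf_integrand 2 (-x) * (-1) + leaf_integrand 2 x"
    proof -
      have "DERIV (\<lambda>x. leaf_int 2 (-x)) x :> leaf_integrand 2 (-x) * (-1)"
        by (rule DERIV_chain2[OF F_deriv]) (auto intro!: derivative_eq_intros)
      from DERIV_add[OF this F_deriv[of x]] show ?thesis by simp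
    qed
    then show "DERIV (\<lambda>x. leaf_int 2 (-x) + leaf_int 2 x) x :> 0"
      by (simp add: f_eq)
  qed
  from DERIV_isconst_all[OF this, of x 0] show ?thesis by (simp add: F_0)
qed

lemma zeta_le:
  assumes c: "\<And>r. r \<ge> 0 \<Longrightarrow> leaf_int 2 r \<le> c"
  shows "zeta 2 \<le> c"
proof -
  define h where "h = (\<lambda>(k::nat) x. if x \<in> {0..real k} then leaf_integrand 2 x else 0)"
  have int: "h k integrable_on {0..}" for k
    unfolding h_def integrable_restrict_Int by (simp add: f_int Int_absorb2)
  have I: "integral {0..} (h k) = leaf_int 2 (real k)" for k
    unfolding h_def integral_restrict_Int by (simp add: Int_absorb2 leaf_int_def)
  have mono: "h k x \<le> h (Suc k) x" if "x \<in> {0..}" for k x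
    using that f_pos[of x] by (auto simp: h_def)
  have conv: "(\<lambda>k. h k x) \<longlonglongrightarrow> leaf_integrand 2 x" if "x \<in> {0..}" for x
  proof (rule tendsto_eventually)
    show "\<forall>\<^sub>F k in sequentially. h k x = leaf_integrand 2 x"
      unfolding eventually_sequentially
    proof (intro exI allI impI)
      fix k assume "nat \<lceil>x\<rceil> \<le> k"
      then have "x \<le> real k" by linarith
      then show "h k x = leaf_integrand 2 x" using that by (simp add: h_def)
    qed
  qed
  have bnd: "bounded (range (\<lambda>k. integral {0..} (h k)))"
    unfolding bounded_real
  proof (intro exI ballI)
    fix y assume "y \<in> range (\<lambda>k. integral {0..} (h k))"
    then obtain k where y: "y = leaf_int 2 (real k)" using I by auto
    have "0 \<le> y" using F_le[of 0 "real k"] F_0 y by simp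
    moreover have "y \<le> c" using c[of "real k"] y by simp
    ultimately show "\<bar>y\<bar> \<le> \<bar>c\<bar>" by simp
  qed
  have "(\<lambda>k. integral {0..} (h k)) \<longlonglongrightarrow> integral {0..} (leaf_integrand 2)"
    using monotone_convergence_increasing[OF int mono conv bnd] by blast
  then have "(\<lambda>k. leaf_int 2 (real k)) \<longlonglongrightarrow> zeta 2"
    by (simp add: I zeta_def)
  then show ?thesis
    by (rule Lim_bounded) (use c in auto)
qed

lemma g_deriv:
  fixes x :: real
  assumes "\<bar>x\<bar> < 1"
  shows "((\<lambda>x. 2 * x * sqrt (1 + x^4) / (1 - x^4)) has_real_derivative
     2 * (1 + 6 * x^4 + x^8) / ((1 - x^4)^2 * sqrt (1 + x^4))) (at x)"
proof -
  have "\<bar>x\<bar>^4 < 1^4" using assms by (intro power_strict_mono) auto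
  then have u: "x^4 < 1" by (simp add: power_even_abs_numeral)
  have sp: "sqrt (1 + x^4) > 0" by (simp add: add_pos_nonneg)
  have ss: "sqrt (1 + x^4)^2 = 1 + x^4" by (simp add: add_nonneg_nonneg)
  have d1: "((\<lambda>x. 2*x/(1-x^4)) has_real_derivative (2*(1-x^4) + 8*x^4)/(1-x^4)^2) (at x)"
    using u by (auto intro!: derivative_eq_intros simp: power2_eq_square field_simps eval_nat_numeral)
  have d2: "((\<lambda>x. sqrt(1+x^4)) has_real_derivative 2*x^3/sqrt(1+x^4)) (at x)"
    using sp by (auto intro!: derivative_eq_intros simp: field_simps eval_nat_numeral)
  have e: "(2*(1-x^4) + 8*x^4)/(1-x^4)^2 * sqrt(1+x^4) + 2*x/(1-x^4) * (2*x^3/sqrt(1+x^4))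
     = 2 * (1 + 6 * x^4 + x^8) / ((1 - x^4)^2 * sqrt (1 + x^4))"
  proof -
    define vv where "vv = x^4"
    define ww where "ww = sqrt (1+x^4)"
    have x8: "x^8 = vv^2" "2*x*(2*x^3) = 4* vv" unfolding vv_def by (simp_all add: eval_nat_numeral)
    have v1: "1 - vv \<noteq> 0" "ww > 0" "ww^2 = 1 + vv" using u sp ss by (auto simp: vv_def ww_def)
    have "(2*(1-vv) + 8* vv)/(1-vv)^2 * ww + 4* vv/(1-vv) * (1/ww)
       = ((2*(1-vv) + 8* vv)*ww^2 + 4* vv*(1-vv)) / ((1-vv)^2*ww)"
      using v1(1,2) by (simp add: field_simps) (simp add: algebra_simps power2_eq_square power4_eq_xxxx)
    also have "\<dots> = 2 * (1 + 6 * vv + vv^2) / ((1 - vv)^2 * ww)"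
      unfolding v1(3) by (simp add: algebra_simps power2_eq_square)
    finally have F: "(2*(1-x^4) + 8*x^4)/(1-x^4)^2 * sqrt (1+x^4) + 4*x^4/(1-x^4) * (1/sqrt (1+x^4))
       = 2 * (1 + 6 * x^4 + (x^4)^2) / ((1 - x^4)^2 * sqrt (1+x^4))" unfolding vv_def ww_def .
    have G: "2*x/(1-x^4) * (2*x^3/sqrt(1+x^4)) = 4*x^4/(1-x^4) * (1/sqrt (1+x^4))"
      by (simp add: eval_nat_numeral)
    have H: "(x^4)^2 = x^8" by (simp add: power_mult[symmetric])
    show ?thesis using F unfolding G H .
  qed
  have fe: "(\<lambda>x::real. 2*x/(1-x^4) * sqrt(1+x^4)) = (\<lambda>x. 2*x* sqrt(1+x^4)/(1-x^4))"
    by (simp add: fun_eq_iff)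
  have e2: "(2*(1-x^4) + 8*x^4)/(1-x^4)^2 * sqrt(1+x^4) + 2*x^3/sqrt(1+x^4) * (2*x/(1-x^4))
     = 2 * (1 + 6 * x^4 + x^8) / ((1 - x^4)^2 * sqrt (1 + x^4))"
    using e by (simp only: mult.commute)
  show ?thesis using DERIV_mult[OF d1 d2] unfolding e2 fe .
qed

lemma alg_A: fixes vv :: real assumes "vv < 1"
  shows "1 + 16 * vv * (1 + vv)^2 / (1 - vv)^4 = ((1 + 6 * vv + vv^2) / (1 - vv)^2)^2"
proof -
  have B: "(1-vv)^4 \<noteq> 0" using assms by simp
  have poly: "(1 + 6 * vv + vv^2)^2 = (1-vv)^4 + 16 * vv * (1+vv)^2"
    by (simp add: power2_eq_square power4_eq_xxxx algebra_simps)
  have "((1 + 6 * vv + vv^2) / (1 - vv)^2)^2 = (1 + 6 * vv + vv^2)^2 / (1 - vv)^4"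
    by (simp add: power_divide power_mult[symmetric])
  also have "\<dots> = ((1-vv)^4 + 16 * vv * (1+vv)^2) / (1 - vv)^4" unfolding poly ..
  also have "\<dots> = 1 + 16 * vv * (1 + vv)^2 / (1 - vv)^4" using B by (simp add: add_divide_distrib)
  finally show ?thesis by simp
qed
lemma alg_B: fixes u s P :: real assumes "u < 1" "s > 0" "P > 0"
  shows "(1 - u)^2 / P * (2 * P / ((1 - u)^2 * s)) - 2 * (1 / s) = 0"
  using assms by (simp add: field_simps)

lemma fg:
  fixes x :: real
  assumes "\<bar>x\<bar> < 1"
  shows "leaf_integrand 2 (2 * x * sqrt (1 + x^4) / (1 - x^4)) = (1 - x^4)^2 / (1 + 6 * x^4 + x^8)"
proof -
  have "\<bar>x\<bar>^4 < 1^4" using assms by (intro power_strict_mono) auto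
  then have u: "x^4 < 1" by (simp add: power_even_abs_numeral)
  define vv where "vv = x^4"
  define ww where "ww = sqrt (1 + x^4)"
  have v0: "vv \<ge> 0" "vv < 1" using u by (auto simp: vv_def)
  have ww: "ww^2 = 1 + vv" unfolding ww_def vv_def by (simp add: add_nonneg_nonneg)
  have "(2 * x * ww / (1 - vv))^4 = 16 * x^4 * (ww^2)^2 / (1 - vv)^4"
    by (simp add: power_divide power_mult_distrib power_mult[symmetric])
  also have "\<dots> = 16 * vv * (1 + vv)^2 / (1 - vv)^4" unfolding ww vv_def ..
  finally have g4: "(2 * x * ww / (1 - vv))^4 = 16 * vv * (1 + vv)^2 / (1 - vv)^4" .
  have "1 + 16 * vv * (1 + vv)^2 / (1 - vv)^4 = ((1 + 6 * vv + vv^2) / (1 - vv)^2)^2"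
    by (rule alg_A[OF v0(2)])
  then have "sqrt (1 + (2 * x * ww / (1 - vv))^4) = (1 + 6 * vv + vv^2) / (1 - vv)^2"
    using v0 g4 by (simp add: add_nonneg_nonneg)
  then have "leaf_integrand 2 (2 * x * ww / (1 - vv)) = (1 - vv)^2 / (1 + 6 * vv + vv^2)"
    by (simp add: f_eq)
  moreover have "vv^2 = x^8" unfolding vv_def by (simp add: power_mult[symmetric])
  ultimately show ?thesis unfolding vv_def ww_def by simp
qed

lemma doubling:
  fixes x :: real
  assumes "\<bar>x\<bar> < 1"
  shows "leaf_int 2 (2 * x * sqrt (1 + x^4) / (1 - x^4)) = 2 * leaf_int 2 x"
proof -
  let ?H = "\<lambda>y. leaf_int 2 (2 * y * sqrt (1 + y^4) / (1 - y^4)) - 2 * leaf_int 2 y"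
  have "DERIV ?H y :> 0" if y: "y \<in> {-1<..<1}" for y
  proof -
    have ay: "\<bar>y\<bar> < 1" using y by auto
    have "\<bar>y\<bar>^4 < 1^4" using ay by (intro power_strict_mono) auto
    then have u: "y^4 < 1" by (simp add: power_even_abs_numeral)
    have sp: "sqrt (1 + y^4) > 0" by (simp add: add_pos_nonneg)
    have "y^4 \<ge> 0" "y^8 \<ge> 0" by (simp_all add: zero_le_even_power)
    then have p: "1 + 6 * y^4 + y^8 > 0" by linarith
    have "DERIV ?H y :> leaf_integrand 2 (2 * y * sqrt (1 + y^4) / (1 - y^4)) *
        (2 * (1 + 6 * y^4 + y^8) / ((1 - y^4)^2 * sqrt (1 + y^4))) - 2 * leaf_integrand 2 y"
      by (intro DERIV_diff DERIV_cmult DERIV_chain2[OF F_deriv] g_deriv F_deriv ay)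
    also have "leaf_integrand 2 (2 * y * sqrt (1 + y^4) / (1 - y^4)) *
        (2 * (1 + 6 * y^4 + y^8) / ((1 - y^4)^2 * sqrt (1 + y^4))) - 2 * leaf_integrand 2 y = 0"
      unfolding fg[OF ay] f_eq[of y] using alg_B[OF u sp p] .
    finally show ?thesis .
  qed
  from DERIV_isconst3[of "-1" 1 x 0 ?H, OF _ _ _ this] assms
  show ?thesis by (simp add: F_0 abs_less_iff)
qed

lemma sleafh_eq: "leaf_int 2 r = y \<Longrightarrow> sleafh 2 y = r"
  unfolding sleafh_def by (rule the_equality) (auto simp: F_inj)

lemma F1: "zeta 2 \<le> 2 * leaf_int 2 1"
proof (rule zeta_le)
  fix r :: real assume r: "r \<ge> 0"
  define q where "q = 1 - 1 / (r + 2)"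
  have q: "1/2 \<le> q" "q < 1" using r by (auto simp: q_def field_simps)
  define x where "x = root 4 q"
  have x4: "x^4 = q" unfolding x_def using q by (intro real_root_pow_pos2) auto
  have x0: "0 \<le> x" "x < 1" unfolding x_def using q by auto
  have x3: "x^3 \<le> 1" using x0 by (intro power_le_one) auto
  have "x^4 = x * x^3" by (simp add: eval_nat_numeral)
  also have "\<dots> \<le> x * 1" using x3 x0 by (intro mult_left_mono) auto
  finally have "x^4 \<le> x" by simp
  then have xh: "1/2 \<le> x" using x4 q by simp
  have s1: "1 \<le> sqrt (1 + x^4)" using x4 q by simp
  have "1 \<le> 2 * x * sqrt (1 + x^4)" using xh s1
    using mult_mono[of 1 "2*x" 1 "sqrt (1 + x^4)"] by simp
  then have "r + 2 \<le> 2 * x * sqrt (1 + x^4) * (r + 2)" using r by simp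
  also have "\<dots> = 2 * x * sqrt (1 + x^4) / (1 - x^4)" using r by (simp add: x4 q_def field_simps)
  finally have "r \<le> 2 * x * sqrt (1 + x^4) / (1 - x^4)" by simp
  then have "leaf_int 2 r \<le> leaf_int 2 (2 * x * sqrt (1 + x^4) / (1 - x^4))" using F_le by blast
  also have "\<dots> = 2 * leaf_int 2 x" using x0 by (intro doubling) auto
  also have "\<dots> \<le> 2 * leaf_int 2 1" using x0 F_le[of x 1] by simp
  finally show "leaf_int 2 r \<le> 2 * leaf_int 2 1" .
qed

lemma exists_pos:
  assumes "0 \<le> y" "y < zeta 2"
  shows "\<exists>r. leaf_int 2 r = y"
proof (rule ccontr)
  assume ne: "\<not> ?thesis"
  have "leaf_int 2 r \<le> y" if r: "r \<ge> 0" for r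
  proof (rule ccontr)
    assume "\<not> leaf_int 2 r \<le> y"
    then have "leaf_int 2 0 \<le> y" "y \<le> leaf_int 2 r" using assms F_0 by auto
    from IVT'[OF this r F_cont] ne show False by blast
  qed
  then have "zeta 2 \<le> y" by (rule zeta_le)
  then show False using assms by simp
qed

lemma exists_F:
  assumes "\<bar>y\<bar> < zeta 2"
  shows "\<exists>r. leaf_int 2 r = y"
proof (cases "y \<ge> 0")
  case True then show ?thesis using exists_pos assms by auto
next
  case False
  then obtain r where "leaf_int 2 r = -y" using exists_pos[of "-y"] assms by auto
  then have "leaf_int 2 (-r) = y" by (simp add: F_odd)
  then show ?thesis by blast
qed

theorem mainTheorem8:
  fixes l :: real
  assumes "- zeta 2 < 2 * l" and "2 * l < zeta 2"
  shows "sleafh 2 (2 * l) =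
    2 * sleafh 2 l * sqrt (1 + (sleafh 2 l) ^ 4) / (1 - (sleafh 2 l) ^ 4)"
proof -
  have "\<bar>l\<bar> < zeta 2" using assms by auto
  then obtain s where s: "leaf_int 2 s = l" using exists_F by blast
  have sl: "sleafh 2 l = s" using sleafh_eq[OF s] .
  have "\<bar>s\<bar> < 1"
  proof (rule ccontr)
    assume "\<not> \<bar>s\<bar> < 1"
    then consider "1 \<le> s" | "s \<le> -1" by linarith
    then show False
    proof cases
      case 1
      then have "leaf_int 2 1 \<le> l" using F_le s by blast
      then show False using F1 assms by linarith
    next
      case 2
      then have "l \<le> leaf_int 2 (-1)" using F_le s by blast
      then show False using F1 assms F_odd[of 1] by linarith
    qed
  qed
  then have d: "leaf_int 2 (2 * s * sqrt (1 + s^4) / (1 - s^4)) = 2 * l"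
    using doubling s by simp
  show ?thesis using sleafh_eq[OF d] sl by simp
qed

end
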